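(* Let $\mathcal G=(\mathcal V,\mathcal E,W)$ be a network, $h\in\mathbb{R}^{\mathcal V}$, and consider the SNC game with binary actions on $\mathcal G$ with external field $h$. If $\mathcal G$ is structurally balanced, then the set $\mathcal N$ of Nash equilibria is globally BR-reachable.
   Context: A network is a triple $\mathcal G=(\mathcal V,\mathcal E,W)$ where $\mathcal V$ is a finite nonempty set, $\mathcal E\subseteq\mathcal V\times\mathcal V$, and $W\in\mathbb{R}^{\mathcal V\times\mathcal V}$ has zero diagonal and satisfies $W_{ij}\neq0$ iff $(i,j)\in\mathcal E$ (weights may have either sign). It is structurally balanced if $\mathcal V$ can be written as a disjoint union $\mathcal V_1\cup\mathcal V_2$ with $W_{ij}\ge0$ whenever $i,j$ lie in the same part and $W_{ij}\le0$ whenever they lie in different parts. The SNC game with binary actions on $\mathcal G$ with external field $h\in\mathbb{R}^{\mathcal V}$ has player set $\mathcal V$, action set $\{-1,+1\}$ for each player, strategy profiles $\mathcal X=\{\pm1\}^{\mathcal V}$, and utilities $u_i(x)=h_ix_i+x_i\sum_{j\in\mathcal V}W_{ij}x_j$. Best responses $\mathcal B_i(x_{-i})=\arg\max_{x_i\in\{\pm1\}}u_i(x_i,x_{-i})$; Nash equilibrium: $x^*_i\in\mathcal B_i(x^*_{-i})$ for all $i$. A BR-path of length $l\ge0$ from $x$ to $y$ is a sequence $x^{(0)}=x,\dots,x^{(l)}=y$ such that for each $k$ some player $i_k$ has $x^{(k)}_{-i_k}=x^{(k-1)}_{-i_k}$ and $x^{(k)}_{i_k}\in\mathcal B_{i_k}(x^{(k-1)}_{-i_k})\setminus\{x^{(k-1)}_{i_k}\}$.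 A set $\mathcal X^*\subseteq\mathcal X$ is globally BR-reachable if from every profile there is a BR-path to some element of $\mathcal X^*$. *)

theory Defs
  imports Complex_Main
begin

text \<open>A network (V, E, W): finite nonempty vertex set V, weight matrix W on V x V with
  zero diagonal; the edge set is E = {(i,j). W i j ~= 0}, determined by W.
  W is taken to vanish outside V x V.\<close>
definition network :: "'v set \<Rightarrow> ('v \<Rightarrow> 'v \<Rightarrow> real) \<Rightarrow> bool" where
  "network V W \<longleftrightarrow> finite V \<and> V \<noteq> {} \<and> (\<forall>i. W i i = 0)
     \<and> (\<forall>i j. W i j \<noteq> 0 \<longrightarrow> i \<in> V \<and> j \<in> V)"

definition edges :: "'v set \<Rightarrow> ('v \<Rightarrow> 'v \<Rightarrow> real) \<Rightarrow> ('v \<times> 'v) set" where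
  "edges V W = {(i,j). i \<in> V \<and> j \<in> V \<and> W i j \<noteq> 0}"

definition structurally_balanced :: "'v set \<Rightarrow> ('v \<Rightarrow> 'v \<Rightarrow> real) \<Rightarrow> bool" where
  "structurally_balanced V W \<longleftrightarrow> (\<exists>V1 V2. V1 \<union> V2 = V \<and> V1 \<inter> V2 = {} \<and>
     (\<forall>i\<in>V. \<forall>j\<in>V. ((i \<in> V1 \<longleftrightarrow> j \<in> V1) \<longrightarrow> W i j \<ge> 0)
                  \<and> ((i \<in> V1 \<longleftrightarrow> j \<notin> V1) \<longrightarrow> W i j \<le> 0)))"

definition profiles :: "'v set \<Rightarrow> ('v \<Rightarrow> real) set" where
  "profiles V = {x. (\<forall>i\<in>V. x i = 1 \<or> x i = -1) \<and> (\<forall>i. i \<notin> V \<longrightarrow> x i = 0)}"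

definition utility :: "'v set \<Rightarrow> ('v \<Rightarrow> 'v \<Rightarrow> real) \<Rightarrow> ('v \<Rightarrow> real) \<Rightarrow> 'v \<Rightarrow> ('v \<Rightarrow> real) \<Rightarrow> real" where
  "utility V W h i x = h i * x i + x i * (\<Sum>j\<in>V. W i j * x j)"

definition best_responses :: "'v set \<Rightarrow> ('v \<Rightarrow> 'v \<Rightarrow> real) \<Rightarrow> ('v \<Rightarrow> real) \<Rightarrow> 'v \<Rightarrow> ('v \<Rightarrow> real) \<Rightarrow> real set" where
  "best_responses V W h i x = {a \<in> {-1, 1}. \<forall>b \<in> {-1, 1}.
      utility V W h i (x(i := b)) \<le> utility V W h i (x(i := a))}"

definition nash_equilibria :: "'v set \<Rightarrow> ('v \<Rightarrow> 'v \<Rightarrow> real) \<Rightarrow> ('v \<Rightarrow> real) \<Rightarrow> ('v \<Rightarrow> real) set" where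
  "nash_equilibria V W h = {x \<in> profiles V. \<forall>i\<in>V. x i \<in> best_responses V W h i x}"

definition br_step :: "'v set \<Rightarrow> ('v \<Rightarrow> 'v \<Rightarrow> real) \<Rightarrow> ('v \<Rightarrow> real) \<Rightarrow> ('v \<Rightarrow> real) \<Rightarrow> ('v \<Rightarrow> real) \<Rightarrow> bool" where
  "br_step V W h x y \<longleftrightarrow> (\<exists>i\<in>V. \<exists>a. a \<in> best_responses V W h i x \<and> a \<noteq> x i \<and> y = x(i := a))"

definition br_path :: "'v set \<Rightarrow> ('v \<Rightarrow> 'v \<Rightarrow> real) \<Rightarrow> ('v \<Rightarrow> real) \<Rightarrow> nat \<Rightarrow> (nat \<Rightarrow> ('v \<Rightarrow> real)) \<Rightarrow> bool" where
  "br_path V W h l p \<longleftrightarrow> (\<forall>k<l. br_step V W h (p k) (p (Suc k)))"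

definition globally_BR_reachable :: "'v set \<Rightarrow> ('v \<Rightarrow> 'v \<Rightarrow> real) \<Rightarrow> ('v \<Rightarrow> real) \<Rightarrow> ('v \<Rightarrow> real) set \<Rightarrow> bool" where
  "globally_BR_reachable V W h S \<longleftrightarrow> (\<forall>x \<in> profiles V. \<exists>l p. br_path V W h l p \<and> p 0 = x \<and> p l \<in> S)"

end

theory Submission
  imports Defs
begin

definition Fv :: "'v set \<Rightarrow> ('v \<Rightarrow> 'v \<Rightarrow> real) \<Rightarrow> ('v \<Rightarrow> real) \<Rightarrow> ('v \<Rightarrow> real) \<Rightarrow> 'v \<Rightarrow> real" where
  "Fv V W h x i = h i + (\<Sum>j\<in>V. W i j * x j)"

lemma util_upd:
  fixes W :: "'v \<Rightarrow> 'v \<Rightarrow> real"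
  assumes "W i i = 0"
  shows "utility V W h i (x(i:=b)) = b * Fv V W h x i"
proof -
  have "(\<Sum>j\<in>V. W i j * (x(i:=b)) j) = (\<Sum>j\<in>V. W i j * x j)"
    by (rule sum.cong) (auto simp: assms)
  then show ?thesis unfolding utility_def Fv_def by (simp add: algebra_simps)
qed

lemma br_char:
  fixes W :: "'v \<Rightarrow> 'v \<Rightarrow> real"
  assumes "W i i = 0"
  shows "a \<in> best_responses V W h i x \<longleftrightarrow> (a = 1 \<or> a = -1) \<and> 0 \<le> a * Fv V W h x i"
proof -
  have "a \<in> best_responses V W h i x \<longleftrightarrow> (a = 1 \<or> a = -1) \<and> (\<forall>b\<in>{-1,1}. b * Fv V W h x i \<le> a * Fv V W h x i)"
    unfolding best_responses_def using util_upd[of W i V h x, OF assms] by auto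
  then show ?thesis by (cases "a = 1"; cases "a = -1") auto
qed

lemma F_upd:
  assumes "i \<in> V" "finite V"
  shows "Fv V W h (x(i:=b)) j = Fv V W h x j + W j i * (b - x i)"
proof -
  have "(\<Sum>k\<in>V. W j k * (x(i:=b)) k) - (\<Sum>k\<in>V. W j k * x k)
      = (\<Sum>k\<in>V. W j k * (x(i:=b)) k - W j k * x k)"
    by (simp add: sum_subtractf)
  also have "\<dots> = (\<Sum>k\<in>V. if k = i then W j i * (b - x i) else 0)"
    by (rule sum.cong) (auto simp: algebra_simps)
  also have "\<dots> = W j i * (b - x i)" using assms by simp
  finally show ?thesis unfolding Fv_def by simp
qed

lemma path_of_rtranclp:
  assumes "(br_step V W h)\<^sup>*\<^sup>* x y"
  shows "\<exists>l p. br_path V W h l p \<and> p 0 = x \<and> p l = y"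
  using assms
proof (induction rule: converse_rtranclp_induct)
  case base
  show ?case by (rule exI[of _ 0], rule exI[of _ "\<lambda>_. y"]) (simp add: br_path_def)
next
  case (step x z)
  then obtain l p where p: "br_path V W h l p" "p 0 = z" "p l = y" by blast
  define q where "q k = (if k = 0 then x else p (k - 1))" for k
  have "br_path V W h (Suc l) q"
    unfolding br_path_def
  proof (intro allI impI)
    fix k assume "k < Suc l"
    show "br_step V W h (q k) (q (Suc k))"
    proof (cases k)
      case 0 then show ?thesis using step p by (simp add: q_def)
    next
      case (Suc m) then show ?thesis using p \<open>k < Suc l\<close> by (simp add: q_def br_path_def)
    qed
  qed
  moreover have "q 0 = x" "q (Suc l) = y" using p by (auto simp: q_def)
  ultimately show ?case by blast
qed

theorem proposition3:
  fixes V :: "'v set" and W :: "'v \<Rightarrow> 'v \<Rightarrow> real" and h :: "'v \<Rightarrow> real"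
  assumes "network V W"
    and "structurally_balanced V W"
  shows "globally_BR_reachable V W h (nash_equilibria V W h)"
proof -
  have fin: "finite V" and diag: "\<And>i. W i i = 0" and supp: "\<And>i j. W i j \<noteq> 0 \<Longrightarrow> i \<in> V \<and> j \<in> V"
    using assms(1) unfolding network_def by auto
  obtain V1 V2 where bal: "\<forall>i\<in>V. \<forall>j\<in>V. ((i \<in> V1 \<longleftrightarrow> j \<in> V1) \<longrightarrow> W i j \<ge> 0)
                  \<and> ((i \<in> V1 \<longleftrightarrow> j \<notin> V1) \<longrightarrow> W i j \<le> 0)"
    using assms(2) unfolding structurally_balanced_def by blast
  define s where "s i = (if i \<in> V1 then 1 else (-1::real))" for i
  have s_cases: "s i = 1 \<or> s i = -1" for i by (simp add: s_def)
  have sW: "0 \<le> s i * s j * W i j" for i j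
  proof (cases "i \<in> V \<and> j \<in> V")
    case True then show ?thesis using bal by (auto simp: s_def)
  next
    case False then have "W i j = 0" using supp by blast
    then show ?thesis by simp
  qed
  let ?R = "(br_step V W h)\<^sup>*\<^sup>*"
  let ?F = "Fv V W h"
  have prof_upd: "x(i := a) \<in> profiles V" if "x \<in> profiles V" "i \<in> V" "a = 1 \<or> a = -1" for x i a
    using that by (auto simp: profiles_def)
  have xs: "x i = s i \<or> x i = - s i" if "x \<in> profiles V" "i \<in> V" for x i
    using that s_cases[of i] by (auto simp: profiles_def)
  have ph1: "\<forall>x\<in>profiles V. card {i\<in>V. x i = s i} = n \<longrightarrow>
      (\<exists>y. ?R x y \<and> y \<in> profiles V \<and> (\<forall>i\<in>V. y i = s i \<longrightarrow> 0 \<le> s i * ?F y i))" for n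
  proof (induction n rule: less_induct)
    case (less n)
    show ?case
    proof (intro ballI impI)
      fix x assume x: "x \<in> profiles V" and cn: "card {i\<in>V. x i = s i} = n"
      show "\<exists>y. ?R x y \<and> y \<in> profiles V \<and> (\<forall>i\<in>V. y i = s i \<longrightarrow> 0 \<le> s i * ?F y i)"
      proof (cases "\<exists>i\<in>V. x i = s i \<and> s i * ?F x i < 0")
        case False then show ?thesis using x by force
      next
        case True
        then obtain i where i: "i \<in> V" "x i = s i" "s i * ?F x i < 0" by blast
        define x' where "x' = x(i := - s i)"
        have st: "br_step V W h x x'"
          unfolding br_step_def x'_def
          using i s_cases[of i] by (intro bexI[OF _ i(1)] exI[of _ "- s i"]) (auto simp: br_char[of W, OF diag])
        have x'p: "x' \<in> profiles V" unfolding x'_def using prof_upd[OF x i(1)] s_cases[of i] by auto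
        have sub: "{j\<in>V. x' j = s j} \<subset> {j\<in>V. x j = s j}"
          using i s_cases[of i] by (auto simp: x'_def)
        have "card {j\<in>V. x' j = s j} < n"
          using psubset_card_mono[OF _ sub] fin cn by auto
        then obtain y where "?R x' y \<and> y \<in> profiles V \<and> (\<forall>i\<in>V. y i = s i \<longrightarrow> 0 \<le> s i * ?F y i)"
          using less.IH x'p by blast
        then show ?thesis using st by (meson converse_rtranclp_into_rtranclp)
      qed
    qed
  qed
  have ph2: "\<forall>x\<in>profiles V. card {i\<in>V. x i = - s i} = n \<longrightarrow>
      (\<forall>i\<in>V. x i = s i \<longrightarrow> 0 \<le> s i * ?F x i) \<longrightarrow>
      (\<exists>y. ?R x y \<and> y \<in> nash_equilibria V W h)" for n
  proof (induction n rule: less_induct)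
    case (less n)
    show ?case
    proof (intro ballI impI)
      fix x assume x: "x \<in> profiles V" and cn: "card {i\<in>V. x i = - s i} = n"
        and inv: "\<forall>i\<in>V. x i = s i \<longrightarrow> 0 \<le> s i * ?F x i"
      show "\<exists>y. ?R x y \<and> y \<in> nash_equilibria V W h"
      proof (cases "\<exists>i\<in>V. x i = - s i \<and> 0 \<le> s i * ?F x i")
        case False
        have "x \<in> nash_equilibria V W h"
          unfolding nash_equilibria_def
        proof (intro CollectI conjI ballI x)
          fix i assume iV: "i \<in> V"
          show "x i \<in> best_responses V W h i x"
            unfolding br_char[of W, OF diag]
            using xs[OF x iV] inv iV False s_cases[of i] by auto
        qed
        then show ?thesis by blast
      next
        case True
        then obtain i where i: "i \<in> V" "x i = - s i" "0 \<le> s i * ?F x i" by blast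
        define x' where "x' = x(i := s i)"
        have st: "br_step V W h x x'"
          unfolding br_step_def x'_def
          using i s_cases[of i] by (intro bexI[OF _ i(1)] exI[of _ "s i"]) (auto simp: br_char[of W, OF diag])
        have x'p: "x' \<in> profiles V" unfolding x'_def using prof_upd[OF x i(1)] s_cases[of i] by auto
        have sub: "{j\<in>V. x' j = - s j} \<subset> {j\<in>V. x j = - s j}"
          using i s_cases[of i] by (auto simp: x'_def)
        have cn': "card {j\<in>V. x' j = - s j} < n"
          using psubset_card_mono[OF _ sub] fin cn by auto
        have inv': "\<forall>j\<in>V. x' j = s j \<longrightarrow> 0 \<le> s j * ?F x' j"
        proof (intro ballI impI)
          fix j assume jV: "j \<in> V" and xj: "x' j = s j"
          have Fj: "?F x' j = ?F x j + W j i * (2 * s i)"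
            unfolding x'_def F_upd[OF i(1) fin] using i(2) by simp
          show "0 \<le> s j * ?F x' j"
          proof (cases "j = i")
            case True
            then have "?F x' j = ?F x j" using Fj diag by simp
            then show ?thesis using True i by simp
          next
            case False
            then have "x j = s j" using xj by (simp add: x'_def)
            then have "0 \<le> s j * ?F x j" using inv jV by blast
            moreover have "s j * ?F x' j = s j * ?F x j + 2 * (s j * s i * W j i)"
              using Fj by (simp add: algebra_simps)
            ultimately show ?thesis using sW[of j i] by linarith
          qed
        qed
        then obtain y where "?R x' y \<and> y \<in> nash_equilibria V W h"
          using less.IH cn' x'p by blast
        then show ?thesis using st by (meson converse_rtranclp_into_rtranclp)
      qed
    qed
  qed
  show ?thesis
    unfolding globally_BR_reachable_def
  proof
    fix x assume x: "x \<in> profiles V"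
    obtain y where y: "?R x y" "y \<in> profiles V" "\<forall>i\<in>V. y i = s i \<longrightarrow> 0 \<le> s i * ?F y i"
      using ph1 x by blast
    obtain z where z: "?R y z" "z \<in> nash_equilibria V W h"
      using ph2 y by blast
    have "?R x z" using y z by simp
    then obtain l p where "br_path V W h l p" "p 0 = x" "p l = z" using path_of_rtranclp by blast
    then show "\<exists>l p. br_path V W h l p \<and> p 0 = x \<and> p l \<in> nash_equilibria V W h" using z by blast
  qed
qed

end
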